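(* Per-strategy scaling of payoffs does not in general map coarse correlated equilibria to reciprocally scaled coarse correlated equilibria. Precisely: there exist a finite two-player normal-form game $(G_1,G_2)$ with strategy sets $\mathcal{A}_1,\mathcal{A}_2$, positive functions $s_1:\mathcal{A}_1\to\mathbb{R}_{>0}$, $s_2:\mathcal{A}_2\to\mathbb{R}_{>0}$, and a coarse correlated equilibrium $\sigma$ of $(G_1,G_2)$ such that, with $\hat G_1(a_1,a_2)=s_2(a_2)G_1(a_1,a_2)$, $\hat G_2(a_1,a_2)=s_1(a_1)G_2(a_1,a_2)$ and $\hat\sigma(a_1,a_2)=\frac{\sigma(a_1,a_2)}{Z\,s_1(a_1)s_2(a_2)}$ where $Z=\sum_{a}\frac{\sigma(a)}{s_1(a_1)s_2(a_2)}$, the distribution $\hat\sigma$ is not a coarse correlated equilibrium of $(\hat G_1,\hat G_2)$.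
   Context: A joint distribution $\sigma$ on $\mathcal{A}_1\times\mathcal{A}_2$ is a coarse correlated equilibrium (CCE) of $(G_1,G_2)$ if for each player $p\in\{1,2\}$ and each $a'_p\in\mathcal{A}_p$: $\sum_{a}\sigma(a)\big(G_p(a'_p,a_{-p})-G_p(a)\big)\le 0$, where $a_{-p}$ is the other player's strategy. *)

theory Defs
  imports Complex_Main
begin

definition is_distribution :: "'a set \<Rightarrow> 'b set \<Rightarrow> ('a \<times> 'b \<Rightarrow> real) \<Rightarrow> bool" where
  "is_distribution A1 A2 \<sigma> \<longleftrightarrow>
     (\<forall>a\<in>A1 \<times> A2. \<sigma> a \<ge> 0) \<and> (\<Sum>a\<in>A1 \<times> A2. \<sigma> a) = 1"

definition is_CCE :: "'a set \<Rightarrow> 'b set \<Rightarrow> ('a \<times> 'b \<Rightarrow> real) \<Rightarrow> ('a \<times> 'b \<Rightarrow> real)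
     \<Rightarrow> ('a \<times> 'b \<Rightarrow> real) \<Rightarrow> bool" where
  "is_CCE A1 A2 G1 G2 \<sigma> \<longleftrightarrow>
     is_distribution A1 A2 \<sigma> \<and>
     (\<forall>b1\<in>A1. (\<Sum>a\<in>A1 \<times> A2. \<sigma> a * (G1 (b1, snd a) - G1 a)) \<le> 0) \<and>
     (\<forall>b2\<in>A2. (\<Sum>a\<in>A1 \<times> A2. \<sigma> a * (G2 (fst a, b2) - G2 a)) \<le> 0)"

end

theory Submission
  imports Defs
begin

lemma prod_set: "({0,1,2::nat} \<times> {0,1::nat}) = {(0,0),(0,1),(1,0),(1,1),(2,0),(2,1)}"
  by auto

theorem mainTheorem2:
  shows "\<exists>(A1::nat set) (A2::nat set) (G1::nat \<times> nat \<Rightarrow> real) (G2::nat \<times> nat \<Rightarrow> real)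
            (s1::nat \<Rightarrow> real) (s2::nat \<Rightarrow> real) (\<sigma>::nat \<times> nat \<Rightarrow> real).
     finite A1 \<and> finite A2 \<and> A1 \<noteq> {} \<and> A2 \<noteq> {} \<and>
     (\<forall>a1\<in>A1. s1 a1 > 0) \<and> (\<forall>a2\<in>A2. s2 a2 > 0) \<and>
     is_CCE A1 A2 G1 G2 \<sigma> \<and>
     (let Z = (\<Sum>a\<in>A1 \<times> A2. \<sigma> a / (s1 (fst a) * s2 (snd a)));
          G1' = (\<lambda>a. s2 (snd a) * G1 a);
          G2' = (\<lambda>a. s1 (fst a) * G2 a);
          \<sigma>' = (\<lambda>a. \<sigma> a / (Z * s1 (fst a) * s2 (snd a)))
      in \<not> is_CCE A1 A2 G1' G2' \<sigma>')"
proof (intro exI conjI)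
  let ?G1 = "\<lambda>a::nat\<times>nat. if fst a = 2 then 1 else if a = (1,1) then 2 else (0::real)"
  let ?s1 = "\<lambda>a::nat. if a = 0 then 1/2 else (1::real)"
  let ?\<sigma> = "\<lambda>a::nat\<times>nat. if a = (0,0) \<or> a = (1,1) then 1/2 else (0::real)"
  show "is_CCE {0,1,2} {0,1} ?G1 (\<lambda>_. 0) ?\<sigma>"
    unfolding is_CCE_def is_distribution_def prod_set by auto
  show "let Z = (\<Sum>a\<in>{0,1,2} \<times> {0,1}. ?\<sigma> a / (?s1 (fst a) * (\<lambda>_. 1) (snd a)));
          G1' = (\<lambda>a. (\<lambda>_. 1) (snd a) * ?G1 a);
          G2' = (\<lambda>a. ?s1 (fst a) * (\<lambda>_. 0) a);
          \<sigma>' = (\<lambda>a. ?\<sigma> a / (Z * ?s1 (fst a) * (\<lambda>_. 1) (snd a)))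
      in \<not> is_CCE {0,1,2} {0,1} G1' G2' \<sigma>'"
    unfolding is_CCE_def is_distribution_def prod_set Let_def
    by (auto intro: bexI[where x=2])
qed auto

end
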